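(* Let $G$ be a graph, $t\in\mathbb N$, and let $I_t=I_t^{(\mathcal P)}(G)$ for $\mathcal P\in\{push,pull,pp\}$. Then $$\mathrm{Var}\big[|I_{t+1}|\,\big|\,I_t\big]\le\mathbb E\big[|I_{t+1}|\,\big|\,I_t\big].$$
   Context: Rumour spreading protocols on a graph $G$, synchronous rounds, each message transmission succeeding independently with probability $q\in(0,1]$. push: every informed vertex chooses a neighbour independently and uniformly at random (iuar) and informs it (if the transmission succeeds). pull: every uninformed vertex chooses a neighbour iuar; if it is informed and transmission succeeds, the asking vertex becomes informed. push\&pull (pp): every vertex chooses a neighbour iuar; if one of the two is informed (and the transmission succeeds) both become informed. $I_t^{(\mathcal P)}(G)$ denotes the set of vertices informed at the beginning of round $t$ under protocol $\mathcal P$. *)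

theory Defs
  imports "HOL-Probability.Probability"
begin

definition graph :: "'a set \<Rightarrow> ('a \<Rightarrow> 'a \<Rightarrow> bool) \<Rightarrow> bool" where
  "graph V E \<longleftrightarrow> finite V \<and> (\<forall>u w. E u w \<longrightarrow> u \<in> V \<and> w \<in> V)
     \<and> (\<forall>u w. E u w \<longrightarrow> E w u) \<and> (\<forall>u. \<not> E u u)"

definition nbrs :: "'a set \<Rightarrow> ('a \<Rightarrow> 'a \<Rightarrow> bool) \<Rightarrow> 'a \<Rightarrow> 'a set" where
  "nbrs V E v = {w \<in> V. E v w}"

datatype protocol = Push | Pull | PushPull

definition vertex_choice :: "'a set \<Rightarrow> ('a \<Rightarrow> 'a \<Rightarrow> bool) \<Rightarrow> real \<Rightarrow> 'a \<Rightarrow> ('a option \<times> bool) pmf" where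
  "vertex_choice V E q v =
     pair_pmf (if nbrs V E v = {} then return_pmf None else map_pmf Some (pmf_of_set (nbrs V E v)))
              (bernoulli_pmf q)"

definition round_choices :: "'a set \<Rightarrow> ('a \<Rightarrow> 'a \<Rightarrow> bool) \<Rightarrow> real \<Rightarrow> ('a \<Rightarrow> 'a option \<times> bool) pmf" where
  "round_choices V E q = Pi_pmf V (None, False) (vertex_choice V E q)"

definition next_informed :: "protocol \<Rightarrow> 'a set \<Rightarrow> 'a set \<Rightarrow> ('a \<Rightarrow> 'a option \<times> bool) \<Rightarrow> 'a set" where
  "next_informed P V I c =
     (case P of
        Push \<Rightarrow> I \<union> {w. \<exists>v\<in>I. fst (c v) = Some w \<and> snd (c v)}
      | Pull \<Rightarrow> I \<union> {v \<in> V - I. \<exists>w\<in>I. fst (c v) = Some w \<and> snd (c v)}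
      | PushPull \<Rightarrow> I \<union> {w. \<exists>v\<in>I. fst (c v) = Some w \<and> snd (c v)}
                     \<union> {v \<in> V. \<exists>w\<in>I. fst (c v) = Some w \<and> snd (c v)})"

text \<open>Distribution of I_{t+1} conditioned on I_t = I.\<close>

definition round_step :: "protocol \<Rightarrow> 'a set \<Rightarrow> ('a \<Rightarrow> 'a \<Rightarrow> bool) \<Rightarrow> real \<Rightarrow> 'a set \<Rightarrow> 'a set pmf" where
  "round_step P V E q I = map_pmf (next_informed P V I) (round_choices V E q)"

end

theory Submission
  imports Defs
begin

lemma var_sum_le:
  fixes M :: "'b pmf" and Z :: "'c \<Rightarrow> 'b \<Rightarrow> real"
  assumes fin: "finite (set_pmf M)" and W: "finite W"
    and Z01: "\<And>w x. 0 \<le> Z w x \<and> Z w x \<le> 1"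
    and cov: "\<And>w w'. w \<in> W \<Longrightarrow> w' \<in> W \<Longrightarrow> w \<noteq> w' \<Longrightarrow>
       measure_pmf.expectation M (\<lambda>x. Z w x * Z w' x)
         \<le> measure_pmf.expectation M (Z w) * measure_pmf.expectation M (Z w')"
  shows "measure_pmf.variance M (\<lambda>x. \<Sum>w\<in>W. (1 - Z w x))
          \<le> measure_pmf.expectation M (\<lambda>x. \<Sum>w\<in>W. (1 - Z w x))"
proof -
  define Y where "Y w x = 1 - Z w x" for w x
  have int: "integrable (measure_pmf M) f" for f :: "'b \<Rightarrow> real"
    using fin by (rule integrable_measure_pmf_finite)
  define \<mu> where "\<mu> w = measure_pmf.expectation M (Y w)" for w
  have ES: "measure_pmf.expectation M (\<lambda>x. \<Sum>w\<in>W. Y w x) = (\<Sum>w\<in>W. \<mu> w)"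
    unfolding \<mu>_def by (simp add: integral_sum int)
  have ES2: "measure_pmf.expectation M (\<lambda>x. (\<Sum>w\<in>W. Y w x)\<^sup>2)
     = (\<Sum>w\<in>W. \<Sum>w'\<in>W. measure_pmf.expectation M (\<lambda>x. Y w x * Y w' x))"
  proof -
    have "(\<lambda>x. (\<Sum>w\<in>W. Y w x)\<^sup>2) = (\<lambda>x. \<Sum>w\<in>W. \<Sum>w'\<in>W. Y w x * Y w' x)"
      by (simp add: power2_eq_square sum_product)
    then show ?thesis by (simp add: integral_sum int)
  qed
  have trm: "measure_pmf.expectation M (\<lambda>x. Y w x * Y w' x) - \<mu> w * \<mu> w'
      \<le> (if w = w' then \<mu> w else 0)" if "w \<in> W" "w' \<in> W" for w w'
  proof (cases "w = w'")
    case True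
    have "measure_pmf.expectation M (\<lambda>x. Y w x * Y w x) \<le> \<mu> w"
      unfolding \<mu>_def
    proof (rule integral_mono[OF int int])
      fix x show "Y w x * Y w x \<le> Y w x" using Z01[of w x] unfolding Y_def
        by (simp add: mult_le_cancel_right1 mult_left_le)
    qed
    moreover have "0 \<le> \<mu> w * \<mu> w" by simp
    ultimately show ?thesis unfolding if_P[OF True] unfolding True[symmetric] by linarith
  next
    case False
    have e1: "measure_pmf.expectation M (\<lambda>x. Y w x * Y w' x)
       = 1 - measure_pmf.expectation M (Z w) - measure_pmf.expectation M (Z w')
         + measure_pmf.expectation M (\<lambda>x. Z w x * Z w' x)"
    proof -
      have "(\<lambda>x. Y w x * Y w' x) = (\<lambda>x. 1 - Z w x - Z w' x + Z w x * Z w' x)"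
        unfolding Y_def by (auto simp: algebra_simps)
      then show ?thesis using int by (simp add: integral_add integral_diff)
    qed
    moreover have e2: "\<mu> w = 1 - measure_pmf.expectation M (Z w)" "\<mu> w' = 1 - measure_pmf.expectation M (Z w')"
      unfolding \<mu>_def Y_def using int by (simp_all add: integral_diff)
    ultimately show ?thesis unfolding e1 e2 using cov[OF that False] False by (simp add: algebra_simps)
  qed
  have "measure_pmf.variance M (\<lambda>x. \<Sum>w\<in>W. Y w x)
      = (\<Sum>w\<in>W. \<Sum>w'\<in>W. measure_pmf.expectation M (\<lambda>x. Y w x * Y w' x) - \<mu> w * \<mu> w')"
    by (subst measure_pmf.variance_eq) (auto simp: int ES ES2 power2_eq_square sum_product sum_subtractf)
  also have "\<dots> \<le> (\<Sum>w\<in>W. \<Sum>w'\<in>W. (if w = w' then \<mu> w else 0))"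
    by (intro sum_mono trm)
  also have "\<dots> = (\<Sum>w\<in>W. \<mu> w)" using W by simp
  finally show ?thesis unfolding Y_def[symmetric] ES .
qed

lemma exp_cong_pmf:
  fixes f g :: "'b \<Rightarrow> real"
  assumes "\<And>x. x \<in> set_pmf M \<Longrightarrow> f x = g x"
  shows "measure_pmf.expectation M f = measure_pmf.expectation M g"
  using assms by (intro integral_cong_AE) (auto simp: AE_measure_pmf_iff)

lemma disj_cov:
  fixes M :: "'b pmf"
  assumes fin: "finite (set_pmf M)" and dj: "\<And>x. \<not> (A x \<and> B x)"
  shows "measure_pmf.expectation M (\<lambda>x. (if A x then 0 else 1) * (if B x then 0 else (1::real)))
    \<le> measure_pmf.expectation M (\<lambda>x. if A x then 0 else (1::real))
      * measure_pmf.expectation M (\<lambda>x. if B x then 0 else (1::real))"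
proof -
  have int: "integrable (measure_pmf M) f" for f :: "'b \<Rightarrow> real"
    using fin by (rule integrable_measure_pmf_finite)
  define a where "a = measure_pmf.expectation M (\<lambda>x. if A x then 1 else (0::real))"
  define b where "b = measure_pmf.expectation M (\<lambda>x. if B x then 1 else (0::real))"
  have a0: "a \<ge> 0" unfolding a_def by (intro integral_nonneg_AE) auto
  have b0: "b \<ge> 0" unfolding b_def by (intro integral_nonneg_AE) auto
  have "(\<lambda>x. if A x then 0 else (1::real)) = (\<lambda>x. 1 - (if A x then 1 else 0))" by auto
  then have ea: "measure_pmf.expectation M (\<lambda>x. if A x then 0 else (1::real)) = 1 - a"
    unfolding a_def using int by (simp add: integral_diff)
  have "(\<lambda>x. if B x then 0 else (1::real)) = (\<lambda>x. 1 - (if B x then 1 else 0))" by auto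
  then have eb: "measure_pmf.expectation M (\<lambda>x. if B x then 0 else (1::real)) = 1 - b"
    unfolding b_def using int by (simp add: integral_diff)
  have "(\<lambda>x. (if A x then 0 else 1) * (if B x then 0 else (1::real)))
     = (\<lambda>x. 1 - (if A x then 1 else 0) - (if B x then 1 else 0))" using dj by fastforce
  then have eab: "measure_pmf.expectation M (\<lambda>x. (if A x then 0 else 1) * (if B x then 0 else (1::real)))
     = 1 - a - b"
    unfolding a_def b_def using int by (simp add: integral_diff)
  have "0 \<le> a * b" using a0 b0 by simp
  then show ?thesis unfolding ea eb eab by (simp add: algebra_simps)
qed

lemma prod_01:
  assumes "finite V"
  shows "(\<Prod>v\<in>V. if Q v then 0 else (1::real)) = (if \<exists>v\<in>V. Q v then 0 else 1)"
  using assms by (induction V rule: finite_induct) auto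

definition act :: "protocol \<Rightarrow> 'a set \<Rightarrow> 'a \<Rightarrow> 'a \<Rightarrow> 'a option \<times> bool \<Rightarrow> bool" where
  "act P I w v x = (case P of
      Push \<Rightarrow> v \<in> I \<and> fst x = Some w \<and> snd x
    | Pull \<Rightarrow> v = w \<and> (\<exists>u\<in>I. fst x = Some u \<and> snd x)
    | PushPull \<Rightarrow> (v \<in> I \<and> fst x = Some w \<and> snd x) \<or> (v = w \<and> (\<exists>u\<in>I. fst x = Some u \<and> snd x)))"

lemma mem_next:
  assumes "I \<subseteq> V" "w \<in> V"
  shows "(w \<in> next_informed P V I c) = (w \<in> I \<or> (\<exists>v\<in>V. act P I w v (c v)))"
  using assms by (cases P) (auto simp: next_informed_def act_def)

lemma act_disj:
  assumes "w \<notin> I" "w' \<notin> I" "w \<noteq> w'"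
  shows "\<not> (act P I w v x \<and> act P I w' v x)"
  using assms by (cases P) (auto simp: act_def)

lemma next_sub:
  assumes "I \<subseteq> V" "\<And>v u. v \<in> V \<Longrightarrow> fst (c v) = Some u \<Longrightarrow> u \<in> V"
  shows "next_informed P V I c \<subseteq> V"
  using assms by (cases P) (auto simp: next_informed_def)

lemma card_sum_ind:
  assumes "finite V" "S \<subseteq> V"
  shows "real (card S) = (\<Sum>w\<in>V. if w \<in> S then 1 else 0)"
proof -
  have "(\<Sum>w\<in>V. if w \<in> S then 1 else (0::real)) = real (card (V \<inter> S))"
    using assms(1) by (simp add: sum.If_cases Int_def)
  moreover have "V \<inter> S = S" using assms(2) by blast
  ultimately show ?thesis by simp
qed

theorem lemma2p1:
  fixes V :: "'a set" and E :: "'a \<Rightarrow> 'a \<Rightarrow> bool" and q :: real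
    and I :: "'a set" and P :: protocol
  assumes "graph V E" and "0 < q" and "q \<le> 1" and "I \<subseteq> V"
  shows "measure_pmf.variance (round_step P V E q I) (\<lambda>S. real (card S))
           \<le> measure_pmf.expectation (round_step P V E q I) (\<lambda>S. real (card S))"
proof -
  have fV: "finite V" using assms(1) by (simp add: graph_def)
  have nV: "nbrs V E v \<subseteq> V" for v by (auto simp: nbrs_def)
  have fn: "finite (nbrs V E v)" for v using finite_subset[OF nV fV] .
  define p where "p = vertex_choice V E q"
  define C where "C = round_choices V E q"
  define N where "N = next_informed P V I"
  have Cdef: "C = Pi_pmf V (None, False) p" unfolding C_def p_def round_choices_def ..
  have setp: "set_pmf (p v) = (if nbrs V E v = {} then {None} else Some ` nbrs V E v)
      \<times> set_pmf (bernoulli_pmf q)" for v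
    unfolding p_def vertex_choice_def using fn[of v] by auto
  have finp: "finite (set_pmf (p v))" for v
    unfolding setp using fn[of v] by (intro finite_cartesian_product) (auto intro: finite_subset[of _ UNIV])
  have setC: "set_pmf C = PiE_dflt V (None, False) (set_pmf \<circ> p)"
    unfolding Cdef using fV by (rule set_Pi_pmf)
  have finC: "finite (set_pmf C)" unfolding setC using fV finp by (intro finite_PiE_dflt) auto
  have supp: "u \<in> V" if "c \<in> set_pmf C" "v \<in> V" "fst (c v) = Some u" for c v u
  proof -
    have "c v \<in> set_pmf (p v)" using that(1,2) unfolding setC PiE_dflt_def by auto
    then show ?thesis using that(3) nV[of v] unfolding setp by (auto split: if_splits)
  qed
  define g where "g w v x = (if act P I w v x then 0 else (1::real))" for w v x
  define Z where "Z w c = (if w \<in> I then 0 else (1::real)) * (\<Prod>v\<in>V. g w v (c v))" for w c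
  have Zind: "Z w c = (if w \<in> N c then 0 else 1)" if "w \<in> V" for w c
    unfolding Z_def g_def N_def using mem_next[OF assms(4) that, of P c] prod_01[OF fV] by auto
  have key: "real (card (N c)) = (\<Sum>w\<in>V. (1 - Z w c))" if "c \<in> set_pmf C" for c
  proof -
    have "N c \<subseteq> V" unfolding N_def using supp[OF that] assms(4) by (intro next_sub) auto
    then have "real (card (N c)) = (\<Sum>w\<in>V. if w \<in> N c then 1 else 0)"
      by (rule card_sum_ind[OF fV])
    also have "\<dots> = (\<Sum>w\<in>V. (1 - Z w c))"
      by (intro sum.cong refl) (auto simp: Zind)
    finally show ?thesis .
  qed
  have Z01: "0 \<le> Z w c \<and> Z w c \<le> 1" for w c
    unfolding Z_def g_def by (auto intro!: prod_nonneg prod_le_1)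
  have cov: "measure_pmf.expectation C (\<lambda>c. Z w c * Z w' c)
      \<le> measure_pmf.expectation C (Z w) * measure_pmf.expectation C (Z w')"
    if "w \<in> V" "w' \<in> V" "w \<noteq> w'" for w w'
  proof (cases "w \<in> I \<or> w' \<in> I")
    case True
    then show ?thesis unfolding Z_def by auto
  next
    case False
    have intp: "integrable (measure_pmf (p v)) f" for v and f :: "_ \<Rightarrow> real"
      using finp by (rule integrable_measure_pmf_finite)
    have Zw: "Z u = (\<lambda>c. \<Prod>v\<in>V. g u v (c v))" if "u \<notin> I" for u
      using that unfolding Z_def by auto
    have EZ: "measure_pmf.expectation C (Z u) = (\<Prod>v\<in>V. measure_pmf.expectation (p v) (g u v))"
      if "u \<notin> I" for u
      unfolding Zw[OF that] Cdef using fV intp by (intro expectation_prod_Pi_pmf) (auto simp: g_def)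
    have "measure_pmf.expectation C (\<lambda>c. Z w c * Z w' c)
        = measure_pmf.expectation C (\<lambda>c. \<Prod>v\<in>V. g w v (c v) * g w' v (c v))"
      using False by (simp add: Zw prod.distrib)
    also have "\<dots> = (\<Prod>v\<in>V. measure_pmf.expectation (p v) (\<lambda>x. g w v x * g w' v x))"
      unfolding Cdef using fV intp by (intro expectation_prod_Pi_pmf) (auto simp: g_def)
    also have "\<dots> \<le> (\<Prod>v\<in>V. measure_pmf.expectation (p v) (g w v) * measure_pmf.expectation (p v) (g w' v))"
    proof (rule prod_mono, rule conjI)
      fix v assume "v \<in> V"
      show "0 \<le> measure_pmf.expectation (p v) (\<lambda>x. g w v x * g w' v x)"
        by (intro integral_nonneg_AE) (auto simp: g_def)
      show "measure_pmf.expectation (p v) (\<lambda>x. g w v x * g w' v x)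
          \<le> measure_pmf.expectation (p v) (g w v) * measure_pmf.expectation (p v) (g w' v)"
        unfolding g_def using finp[of v] act_disj[of w I w' P v] False that(3)
        by (intro disj_cov) auto
    qed
    also have "\<dots> = measure_pmf.expectation C (Z w) * measure_pmf.expectation C (Z w')"
      using False by (simp add: EZ prod.distrib)
    finally show ?thesis .
  qed
  have RS: "round_step P V E q I = map_pmf N C" unfolding round_step_def N_def C_def ..
  have eqE: "measure_pmf.expectation C (\<lambda>c. real (card (N c)))
      = measure_pmf.expectation C (\<lambda>c. \<Sum>w\<in>V. (1 - Z w c))"
    by (rule exp_cong_pmf) (rule key)
  have eqV: "measure_pmf.variance C (\<lambda>c. real (card (N c)))
      = measure_pmf.variance C (\<lambda>c. \<Sum>w\<in>V. (1 - Z w c))"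
    unfolding eqE by (rule exp_cong_pmf) (simp add: key)
  have "measure_pmf.variance (round_step P V E q I) (\<lambda>S. real (card S))
      = measure_pmf.variance C (\<lambda>c. real (card (N c)))"
    unfolding RS integral_map_pmf ..
  also have "\<dots> = measure_pmf.variance C (\<lambda>c. \<Sum>w\<in>V. (1 - Z w c))" by (rule eqV)
  also have "\<dots> \<le> measure_pmf.expectation C (\<lambda>c. \<Sum>w\<in>V. (1 - Z w c))"
    by (rule var_sum_le[OF finC fV Z01 cov])
  also have "\<dots> = measure_pmf.expectation C (\<lambda>c. real (card (N c)))" by (rule eqE[symmetric])
  also have "\<dots> = measure_pmf.expectation (round_step P V E q I) (\<lambda>S. real (card S))"
    unfolding RS integral_map_pmf ..
  finally show ?thesis .
qed

end
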